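(* (1) $\mathsf{LKur}$ is strictly contained in $\mathsf{GKur}$. (2) $\mathsf{MGrz}\vee\mathsf{LKur}=\mathsf{MGrz}\vee\mathsf{GKur}$, where $\vee$ denotes the smallest extension of $\mathsf{MS4}$ containing both logics.
   Context: $\mathsf{MIPC}$ is the smallest set of formulas in the bimodal language $\mathcal{L}_{\forall\exists}$ containing all theorems of $\mathsf{IPC}$; $\forall(p\wedge q)\leftrightarrow(\forall p\wedge\forall q)$, $\forall p\to p$, $\forall p\to\forall\forall p$; $\exists(p\vee q)\leftrightarrow(\exists p\vee\exists q)$, $p\to\exists p$, $\exists\exists p\to\exists p$, $(\exists p\wedge\exists q)\to\exists(\exists p\wedge q)$; $\exists\forall p\to\forall p$, $\exists p\to\forall\exists p$; closed under modus ponens, substitution and $\varphi/\forall\varphi$. $\mathsf{Kur}=\mathsf{MIPC}+\forall\neg\neg p\to\neg\neg\forall p$. $\mathsf{MS4}$ is the smallest set of formulas in the classical bimodal language $\mathcal{L}_{\Box\forall}$ containing all classical tautologies, the $\mathsf{S4}$ axioms for $\Box$, the $\mathsf{S5}$ axioms for $\forall$, and $\Box\forall p\to\forall\Box p$, closed under modus ponens, substitution, $\Box$- and $\forall$-necessitation; $\Diamond=\neg\Box\neg$, $\exists=\neg\forall\neg$. $\mathsf{MGrz}=\mathsf{MS4}+\Box(\Box(p\to\Box p)\to p)\to p$; $\mathsf{LKur}=\mathsf{MS4}+\Box\forall\Diamond\Box p\to\Diamond\forall p$; $\mathsf{GKur}=\mathsf{MS4}+\{\varphi^t:\mathsf{Kur}\vdash\varphi\}$,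 with $(-)^t$ the Gödel translation: $\bot^t=\bot$, $p^t=\Box p$, $(\varphi\wedge\psi)^t=\varphi^t\wedge\psi^t$, $(\varphi\vee\psi)^t=\varphi^t\vee\psi^t$, $(\varphi\to\psi)^t=\Box(\neg\varphi^t\vee\psi^t)$, $(\forall\varphi)^t=\Box\forall\varphi^t$, $(\exists\varphi)^t=\exists\varphi^t$. *)

theory Defs
  imports Main
begin

datatype ifm = IBot | IAt nat | IAnd ifm ifm | IOr ifm ifm | IImp ifm ifm
  | IAll ifm | IEx ifm

definition INeg :: "ifm \<Rightarrow> ifm" where "INeg a = IImp a IBot"
definition IIff :: "ifm \<Rightarrow> ifm \<Rightarrow> ifm" where "IIff a b = IAnd (IImp a b) (IImp b a)"

primrec isubst :: "(nat \<Rightarrow> ifm) \<Rightarrow> ifm \<Rightarrow> ifm" where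
  "isubst s IBot = IBot"
| "isubst s (IAt n) = s n"
| "isubst s (IAnd a b) = IAnd (isubst s a) (isubst s b)"
| "isubst s (IOr a b) = IOr (isubst s a) (isubst s b)"
| "isubst s (IImp a b) = IImp (isubst s a) (isubst s b)"
| "isubst s (IAll a) = IAll (isubst s a)"
| "isubst s (IEx a) = IEx (isubst s a)"

text \<open>Axiom schemes of a standard Hilbert calculus for IPC (all instances in the
  full language, so that every substitution instance of an IPC theorem is derivable).\<close>
inductive ipc_axiom :: "ifm \<Rightarrow> bool" where
  "ipc_axiom (IImp a (IImp b a))"
| "ipc_axiom (IImp (IImp a (IImp b c)) (IImp (IImp a b) (IImp a c)))"
| "ipc_axiom (IImp (IAnd a b) a)"
| "ipc_axiom (IImp (IAnd a b) b)"
| "ipc_axiom (IImp a (IImp b (IAnd a b)))"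
| "ipc_axiom (IImp a (IOr a b))"
| "ipc_axiom (IImp b (IOr a b))"
| "ipc_axiom (IImp (IImp a c) (IImp (IImp b c) (IImp (IOr a b) c)))"
| "ipc_axiom (IImp IBot a)"

abbreviation "ip \<equiv> IAt 0"
abbreviation "iq \<equiv> IAt 1"

definition mipc_axioms :: "ifm set" where
  "mipc_axioms = {
     IIff (IAll (IAnd ip iq)) (IAnd (IAll ip) (IAll iq)),
     IImp (IAll ip) ip,
     IImp (IAll ip) (IAll (IAll ip)),
     IIff (IEx (IOr ip iq)) (IOr (IEx ip) (IEx iq)),
     IImp ip (IEx ip),
     IImp (IEx (IEx ip)) (IEx ip),
     IImp (IAnd (IEx ip) (IEx iq)) (IEx (IAnd (IEx ip) iq)),
     IImp (IEx (IAll ip)) (IAll ip),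
     IImp (IEx ip) (IAll (IEx ip)) }"

inductive_set MIPC_ext :: "ifm set \<Rightarrow> ifm set" for G :: "ifm set" where
  ipc: "ipc_axiom a \<Longrightarrow> a \<in> MIPC_ext G"
| ax: "a \<in> mipc_axioms \<Longrightarrow> a \<in> MIPC_ext G"
| extra: "a \<in> G \<Longrightarrow> a \<in> MIPC_ext G"
| mp: "a \<in> MIPC_ext G \<Longrightarrow> IImp a b \<in> MIPC_ext G \<Longrightarrow> b \<in> MIPC_ext G"
| subst: "a \<in> MIPC_ext G \<Longrightarrow> isubst s a \<in> MIPC_ext G"
| nec: "a \<in> MIPC_ext G \<Longrightarrow> IAll a \<in> MIPC_ext G"

definition MIPC :: "ifm set" where "MIPC = MIPC_ext {}"

definition Kur :: "ifm set" where
  "Kur = MIPC_ext {IImp (IAll (INeg (INeg ip))) (INeg (INeg (IAll ip)))}"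

datatype cfm = CBot | CAt nat | CAnd cfm cfm | COr cfm cfm | CImp cfm cfm
  | CBox cfm | CAll cfm

definition CNeg :: "cfm \<Rightarrow> cfm" where "CNeg a = CImp a CBot"
definition CDia :: "cfm \<Rightarrow> cfm" where "CDia a = CNeg (CBox (CNeg a))"
definition CEx :: "cfm \<Rightarrow> cfm" where "CEx a = CNeg (CAll (CNeg a))"

primrec csubst :: "(nat \<Rightarrow> cfm) \<Rightarrow> cfm \<Rightarrow> cfm" where
  "csubst s CBot = CBot"
| "csubst s (CAt n) = s n"
| "csubst s (CAnd a b) = CAnd (csubst s a) (csubst s b)"
| "csubst s (COr a b) = COr (csubst s a) (csubst s b)"
| "csubst s (CImp a b) = CImp (csubst s a) (csubst s b)"
| "csubst s (CBox a) = CBox (csubst s a)"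
| "csubst s (CAll a) = CAll (csubst s a)"

inductive cpc_axiom :: "cfm \<Rightarrow> bool" where
  "cpc_axiom (CImp a (CImp b a))"
| "cpc_axiom (CImp (CImp a (CImp b c)) (CImp (CImp a b) (CImp a c)))"
| "cpc_axiom (CImp (CAnd a b) a)"
| "cpc_axiom (CImp (CAnd a b) b)"
| "cpc_axiom (CImp a (CImp b (CAnd a b)))"
| "cpc_axiom (CImp a (COr a b))"
| "cpc_axiom (CImp b (COr a b))"
| "cpc_axiom (CImp (CImp a c) (CImp (CImp b c) (CImp (COr a b) c)))"
| "cpc_axiom (CImp CBot a)"
| "cpc_axiom (CImp (CNeg (CNeg a)) a)"

abbreviation "cp \<equiv> CAt 0"
abbreviation "cq \<equiv> CAt 1"

definition ms4_axioms :: "cfm set" where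
  "ms4_axioms = {
     CImp (CBox (CImp cp cq)) (CImp (CBox cp) (CBox cq)),
     CImp (CBox cp) cp,
     CImp (CBox cp) (CBox (CBox cp)),
     CImp (CAll (CImp cp cq)) (CImp (CAll cp) (CAll cq)),
     CImp (CAll cp) cp,
     CImp (CEx cp) (CAll (CEx cp)),
     CImp (CBox (CAll cp)) (CAll (CBox cp)) }"

inductive_set MS4_ext :: "cfm set \<Rightarrow> cfm set" for G :: "cfm set" where
  cpc: "cpc_axiom a \<Longrightarrow> a \<in> MS4_ext G"
| ax: "a \<in> ms4_axioms \<Longrightarrow> a \<in> MS4_ext G"
| extra: "a \<in> G \<Longrightarrow> a \<in> MS4_ext G"
| mp: "a \<in> MS4_ext G \<Longrightarrow> CImp a b \<in> MS4_ext G \<Longrightarrow> b \<in> MS4_ext G"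
| subst: "a \<in> MS4_ext G \<Longrightarrow> csubst s a \<in> MS4_ext G"
| nec_box: "a \<in> MS4_ext G \<Longrightarrow> CBox a \<in> MS4_ext G"
| nec_all: "a \<in> MS4_ext G \<Longrightarrow> CAll a \<in> MS4_ext G"

definition MS4 :: "cfm set" where "MS4 = MS4_ext {}"

definition MGrz :: "cfm set" where
  "MGrz = MS4_ext {CImp (CBox (CImp (CBox (CImp cp (CBox cp))) cp)) cp}"

definition LKur :: "cfm set" where
  "LKur = MS4_ext {CImp (CBox (CAll (CDia (CBox cp)))) (CDia (CAll cp))}"

primrec goedel :: "ifm \<Rightarrow> cfm" where
  "goedel IBot = CBot"
| "goedel (IAt n) = CBox (CAt n)"
| "goedel (IAnd a b) = CAnd (goedel a) (goedel b)"
| "goedel (IOr a b) = COr (goedel a) (goedel b)"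
| "goedel (IImp a b) = CBox (COr (CNeg (goedel a)) (goedel b))"
| "goedel (IAll a) = CBox (CAll (goedel a))"
| "goedel (IEx a) = CEx (goedel a)"

definition GKur :: "cfm set" where
  "GKur = MS4_ext (goedel ` Kur)"

definition join :: "cfm set \<Rightarrow> cfm set \<Rightarrow> cfm set" where
  "join L M = MS4_ext (L \<union> M)"

end

theory Submission
  imports Defs
begin


fun pval :: "(cfm \<Rightarrow> bool) \<Rightarrow> cfm \<Rightarrow> bool" where
  "pval v CBot = False"
| "pval v (CAt n) = v (CAt n)"
| "pval v (CAnd a b) = (pval v a \<and> pval v b)"
| "pval v (COr a b) = (pval v a \<or> pval v b)"
| "pval v (CImp a b) = (pval v a \<longrightarrow> pval v b)"
| "pval v (CBox a) = v (CBox a)"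
| "pval v (CAll a) = v (CAll a)"

lemma pval_CNeg[simp]: "pval v (CNeg a) = (\<not> pval v a)" by (simp add: CNeg_def)
lemma pval_CDia[simp]: "pval v (CDia a) = (\<not> v (CBox (CNeg a)))" by (simp add: CDia_def)
lemma pval_CEx[simp]: "pval v (CEx a) = (\<not> v (CAll (CNeg a)))" by (simp add: CEx_def)

fun atoms :: "cfm \<Rightarrow> cfm set" where
  "atoms CBot = {}"
| "atoms (CAt n) = {CAt n}"
| "atoms (CAnd a b) = atoms a \<union> atoms b"
| "atoms (COr a b) = atoms a \<union> atoms b"
| "atoms (CImp a b) = atoms a \<union> atoms b"
| "atoms (CBox a) = {CBox a}"
| "atoms (CAll a) = {CAll a}"

lemma finite_atoms: "finite (atoms a)" by (induct a) auto

lemma atoms_pval: "x \<in> atoms a \<Longrightarrow> pval v x = v x"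
  by (induct a) auto

inductive deriv :: "cfm set \<Rightarrow> cfm set \<Rightarrow> cfm \<Rightarrow> bool" for G where
  hyp: "a \<in> \<Gamma> \<Longrightarrow> deriv G \<Gamma> a"
| th: "a \<in> MS4_ext G \<Longrightarrow> deriv G \<Gamma> a"
| dmp: "deriv G \<Gamma> a \<Longrightarrow> deriv G \<Gamma> (CImp a b) \<Longrightarrow> deriv G \<Gamma> b"

lemma dax: "cpc_axiom a \<Longrightarrow> deriv G \<Gamma> a"
  by (rule deriv.th, rule MS4_ext.cpc)

lemma ident: "CImp a a \<in> MS4_ext G"
proof -
  have 1: "CImp a (CImp (CImp a a) a) \<in> MS4_ext G" by (rule MS4_ext.cpc, rule cpc_axiom.intros)
  have 2: "CImp (CImp a (CImp (CImp a a) a)) (CImp (CImp a (CImp a a)) (CImp a a)) \<in> MS4_ext G"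
    by (rule MS4_ext.cpc, rule cpc_axiom.intros)
  have 3: "CImp a (CImp a a) \<in> MS4_ext G" by (rule MS4_ext.cpc, rule cpc_axiom.intros)
  show ?thesis using MS4_ext.mp[OF 3 MS4_ext.mp[OF 1 2]] .
qed

lemma deriv_weaken: "deriv G \<Gamma> a \<Longrightarrow> \<Gamma> \<subseteq> \<Delta> \<Longrightarrow> deriv G \<Delta> a"
  by (induct rule: deriv.induct) (auto intro: deriv.intros)

lemma deduction: "deriv G (insert a \<Gamma>) b \<Longrightarrow> deriv G \<Gamma> (CImp a b)"
proof (induct "insert a \<Gamma>" b rule: deriv.induct)
  case (hyp c)
  show ?case
  proof (cases "c = a")
    case True then show ?thesis using ident by (auto intro: deriv.th)
  next
    case False
    then have "deriv G \<Gamma> c" using hyp by (auto intro: deriv.hyp)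
    then show ?thesis by (rule deriv.dmp) (rule dax, rule cpc_axiom.intros)
  qed
next
  case (th c)
  then have "deriv G \<Gamma> c" by (rule deriv.th)
  then show ?case by (rule deriv.dmp) (rule dax, rule cpc_axiom.intros)
next
  case (dmp c d)
  have "deriv G \<Gamma> (CImp (CImp a (CImp c d)) (CImp (CImp a c) (CImp a d)))"
    by (rule dax, rule cpc_axiom.intros)
  then show ?case using dmp by (meson deriv.dmp)
qed

lemma deriv_empty: "deriv G \<Gamma> a \<Longrightarrow> \<Gamma> = {} \<Longrightarrow> a \<in> MS4_ext G"
  by (induct rule: deriv.induct) (auto intro: MS4_ext.mp)

lemma dmp2: "deriv G \<Gamma> a \<Longrightarrow> deriv G \<Gamma> b \<Longrightarrow> deriv G \<Gamma> (CImp a (CImp b c)) \<Longrightarrow> deriv G \<Gamma> c"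
  by (meson deriv.dmp)

lemma dneg_elim: "deriv G \<Gamma> a \<Longrightarrow> deriv G \<Gamma> (CNeg a) \<Longrightarrow> deriv G \<Gamma> CBot"
  unfolding CNeg_def by (rule deriv.dmp)

lemma d_and: "deriv G \<Gamma> a \<Longrightarrow> deriv G \<Gamma> b \<Longrightarrow> deriv G \<Gamma> (CAnd a b)"
  by (rule dmp2, assumption+, rule dax, rule cpc_axiom.intros)

lemma dhyp: "deriv G (insert a \<Gamma>) a" by (rule deriv.hyp) simp
lemma dw: "deriv G \<Gamma> a \<Longrightarrow> deriv G (insert b \<Gamma>) a" using deriv_weaken by blast

lemma d_nand1: "deriv G \<Gamma> (CNeg a) \<Longrightarrow> deriv G \<Gamma> (CNeg (CAnd a b))"
proof -
  assume h: "deriv G \<Gamma> (CNeg a)"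
  have "deriv G (insert (CAnd a b) \<Gamma>) a"
    using deriv.dmp[OF dhyp dax[OF cpc_axiom.intros(3)]] .
  then have "deriv G (insert (CAnd a b) \<Gamma>) CBot" using dneg_elim dw[OF h] by blast
  then show ?thesis unfolding CNeg_def[of "CAnd a b"] by (rule deduction)
qed

lemma d_nand2: "deriv G \<Gamma> (CNeg b) \<Longrightarrow> deriv G \<Gamma> (CNeg (CAnd a b))"
proof -
  assume h: "deriv G \<Gamma> (CNeg b)"
  have "deriv G (insert (CAnd a b) \<Gamma>) b"
    using deriv.dmp[OF dhyp dax[OF cpc_axiom.intros(4)]] .
  then have "deriv G (insert (CAnd a b) \<Gamma>) CBot" using dneg_elim dw[OF h] by blast
  then show ?thesis unfolding CNeg_def[of "CAnd a b"] by (rule deduction)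
qed

lemma d_or1: "deriv G \<Gamma> a \<Longrightarrow> deriv G \<Gamma> (COr a b)"
  by (rule deriv.dmp, assumption, rule dax, rule cpc_axiom.intros)
lemma d_or2: "deriv G \<Gamma> b \<Longrightarrow> deriv G \<Gamma> (COr a b)"
  by (rule deriv.dmp, assumption, rule dax, rule cpc_axiom.intros)
lemma d_nor: "deriv G \<Gamma> (CNeg a) \<Longrightarrow> deriv G \<Gamma> (CNeg b) \<Longrightarrow> deriv G \<Gamma> (CNeg (COr a b))"
  unfolding CNeg_def by (rule dmp2, assumption+, rule dax, rule cpc_axiom.intros)

lemma d_imp1: "deriv G \<Gamma> (CNeg a) \<Longrightarrow> deriv G \<Gamma> (CImp a b)"
proof -
  assume h: "deriv G \<Gamma> (CNeg a)"
  have "deriv G (insert a \<Gamma>) CBot" using dneg_elim[OF dhyp dw[OF h]] .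
  then have "deriv G (insert a \<Gamma>) b" using deriv.dmp dax cpc_axiom.intros(9) by blast
  then show ?thesis by (rule deduction)
qed
lemma d_imp2: "deriv G \<Gamma> b \<Longrightarrow> deriv G \<Gamma> (CImp a b)"
  by (rule deriv.dmp, assumption, rule dax, rule cpc_axiom.intros)
lemma d_nimp: "deriv G \<Gamma> a \<Longrightarrow> deriv G \<Gamma> (CNeg b) \<Longrightarrow> deriv G \<Gamma> (CNeg (CImp a b))"
proof -
  assume h1: "deriv G \<Gamma> a" and h2: "deriv G \<Gamma> (CNeg b)"
  have "deriv G (insert (CImp a b) \<Gamma>) b" using deriv.dmp[OF dw[OF h1] dhyp] .
  then have "deriv G (insert (CImp a b) \<Gamma>) CBot" using dneg_elim dw[OF h2] by blast
  then show ?thesis unfolding CNeg_def[of "CImp a b"] by (rule deduction)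
qed

lemma d_lem: "deriv G \<Gamma> (COr x (CNeg x))"
proof -
  let ?D = "COr x (CNeg x)"
  have "deriv G (insert x (insert (CNeg ?D) \<Gamma>)) ?D" using d_or1[OF dhyp] .
  then have "deriv G (insert x (insert (CNeg ?D) \<Gamma>)) CBot" using dneg_elim dw[OF dhyp] by blast
  then have "deriv G (insert (CNeg ?D) \<Gamma>) (CNeg x)" unfolding CNeg_def[of x] by (rule deduction)
  then have "deriv G (insert (CNeg ?D) \<Gamma>) ?D" by (rule d_or2)
  then have "deriv G (insert (CNeg ?D) \<Gamma>) CBot" using dneg_elim dhyp by blast
  then have "deriv G \<Gamma> (CNeg (CNeg ?D))" unfolding CNeg_def[of "CNeg ?D"] by (rule deduction)
  then show ?thesis using deriv.dmp dax[OF cpc_axiom.intros(10)] by blast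
qed

lemma d_cases: "deriv G (insert x \<Gamma>) a \<Longrightarrow> deriv G (insert (CNeg x) \<Gamma>) a \<Longrightarrow> deriv G \<Gamma> a"
proof -
  assume 1: "deriv G (insert x \<Gamma>) a" and 2: "deriv G (insert (CNeg x) \<Gamma>) a"
  have "deriv G \<Gamma> (CImp (CImp x a) (CImp (CImp (CNeg x) a) (CImp (COr x (CNeg x)) a)))"
    by (rule dax, rule cpc_axiom.intros)
  then show ?thesis using deduction[OF 1] deduction[OF 2] d_lem deriv.dmp by metis
qed

definition lit :: "(cfm \<Rightarrow> bool) \<Rightarrow> cfm \<Rightarrow> cfm" where
  "lit v a = (if pval v a then a else CNeg a)"

lemma kalmar: "atoms a \<subseteq> S \<Longrightarrow> deriv G (lit v ` S) (lit v a)"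
proof (induct a)
  case CBot
  then show ?case unfolding lit_def CNeg_def by (auto intro: deriv.th ident)
next
  case (CAt n) then show ?case by (auto intro: deriv.hyp)
next
  case (CBox a) then show ?case by (auto intro: deriv.hyp)
next
  case (CAll a) then show ?case by (auto intro: deriv.hyp)
next
  case (CAnd a b) then show ?case
    by (auto simp: lit_def split: if_splits intro: d_and d_nand1 d_nand2)
next
  case (COr a b) then show ?case
    by (auto simp: lit_def split: if_splits intro: d_or1 d_or2 d_nor)
next
  case (CImp a b) then show ?case
    by (auto simp: lit_def split: if_splits intro: d_imp1 d_imp2 d_nimp)
qed

lemma elim_atoms: "finite S \<Longrightarrow> S \<subseteq> atoms a \<Longrightarrow> (\<And>v. deriv G (\<Gamma> \<union> lit v ` S) c) \<Longrightarrow> deriv G \<Gamma> c"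
proof (induct S rule: finite_induct)
  case empty then show ?case by simp
next
  case (insert x S)
  show ?case
  proof (rule insert.hyps(3))
    show "S \<subseteq> atoms a" using insert by auto
    fix v
    have ag: "\<And>b. lit (v(x := b)) ` S = lit v ` S"
    proof -
      fix b
      { fix y assume "y \<in> S"
        then have "y \<noteq> x" "y \<in> atoms a" using insert by auto
        then have "lit (v(x := b)) y = lit v y"
          unfolding lit_def using atoms_pval[of y a] by simp }
      then show "lit (v(x := b)) ` S = lit v ` S" by (auto simp: image_def)
    qed
    have px: "pval v' x = v' x" for v' using atoms_pval[of x a] insert by auto
    have "deriv G (\<Gamma> \<union> lit (v(x := True)) ` insert x S) c" by (rule insert.prems)
    then have 1: "deriv G (insert x (\<Gamma> \<union> lit v ` S)) c" using ag[of True] px[of "v(x:=True)"]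
      by (simp add: lit_def)
    have "deriv G (\<Gamma> \<union> lit (v(x := False)) ` insert x S) c" by (rule insert.prems)
    then have 2: "deriv G (insert (CNeg x) (\<Gamma> \<union> lit v ` S)) c" using ag[of False] px[of "v(x:=False)"]
      by (simp add: lit_def)
    show "deriv G (\<Gamma> \<union> lit v ` S) c" using d_cases[OF 1 2] .
  qed
qed

theorem taut: "(\<And>v. pval v a) \<Longrightarrow> a \<in> MS4_ext G"
proof -
  assume h: "\<And>v. pval v a"
  have "deriv G ({} \<union> lit v ` atoms a) a" for v
    using kalmar[of a "atoms a" G v] h by (simp add: lit_def)
  then have "deriv G {} a" by (rule elim_atoms[OF finite_atoms order_refl])
  then show ?thesis by (rule deriv_empty) simp
qed



abbreviation Pf :: "cfm set \<Rightarrow> cfm \<Rightarrow> bool" where "Pf G a \<equiv> a \<in> MS4_ext G"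

lemma t1: "Pf G a \<Longrightarrow> (\<And>v. pval v a \<Longrightarrow> pval v b) \<Longrightarrow> Pf G b"
proof -
  assume "Pf G a" and h: "\<And>v. pval v a \<Longrightarrow> pval v b"
  moreover have "Pf G (CImp a b)" by (rule taut) (auto intro: h)
  ultimately show ?thesis by (meson MS4_ext.mp)
qed
lemma t2: "Pf G a \<Longrightarrow> Pf G b \<Longrightarrow> (\<And>v. pval v a \<Longrightarrow> pval v b \<Longrightarrow> pval v c) \<Longrightarrow> Pf G c"
proof -
  assume "Pf G a" "Pf G b" and h: "\<And>v. pval v a \<Longrightarrow> pval v b \<Longrightarrow> pval v c"
  moreover have "Pf G (CImp a (CImp b c))" by (rule taut) (auto intro: h)
  ultimately show ?thesis by (meson MS4_ext.mp)
qed
lemma t3: "Pf G a \<Longrightarrow> Pf G b \<Longrightarrow> Pf G c \<Longrightarrow> (\<And>v. pval v a \<Longrightarrow> pval v b \<Longrightarrow> pval v c \<Longrightarrow> pval v d) \<Longrightarrow> Pf G d"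
proof -
  assume "Pf G a" "Pf G b" "Pf G c" and h: "\<And>v. pval v a \<Longrightarrow> pval v b \<Longrightarrow> pval v c \<Longrightarrow> pval v d"
  moreover have "Pf G (CImp a (CImp b (CImp c d)))" by (rule taut) (auto intro: h)
  ultimately show ?thesis by (meson MS4_ext.mp)
qed
lemma t0: "(\<And>v. pval v a) \<Longrightarrow> Pf G a" by (rule taut)

lemma csubst_CNeg[simp]: "csubst s (CNeg a) = CNeg (csubst s a)" by (simp add: CNeg_def)
lemma csubst_CDia[simp]: "csubst s (CDia a) = CDia (csubst s a)" by (simp add: CDia_def)
lemma csubst_CEx[simp]: "csubst s (CEx a) = CEx (csubst s a)" by (simp add: CEx_def)

definition sb :: "cfm \<Rightarrow> cfm \<Rightarrow> nat \<Rightarrow> cfm" where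
  "sb a b = (\<lambda>n. if n = 0 then a else if n = 1 then b else CAt n)"
lemma sb_simps[simp]: "sb a b 0 = a" "sb a b (Suc 0) = b" by (auto simp: sb_def)

lemma ms4ax: "x \<in> ms4_axioms \<Longrightarrow> Pf G (csubst (sb a b) x)"
  by (rule MS4_ext.subst, rule MS4_ext.ax)

lemma axK: "Pf G (CImp (CBox (CImp a b)) (CImp (CBox a) (CBox b)))"
  using ms4ax[where x="CImp (CBox (CImp cp cq)) (CImp (CBox cp) (CBox cq))" and G=G and a=a and b=b] by (simp add: ms4_axioms_def)
lemma axT: "Pf G (CImp (CBox a) a)"
  using ms4ax[where x="CImp (CBox cp) cp" and G=G and a=a and b=b] by (simp add: ms4_axioms_def)
lemma ax4: "Pf G (CImp (CBox a) (CBox (CBox a)))"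
  using ms4ax[where x="CImp (CBox cp) (CBox (CBox cp))" and G=G and a=a and b=b] by (simp add: ms4_axioms_def)
lemma axKA: "Pf G (CImp (CAll (CImp a b)) (CImp (CAll a) (CAll b)))"
  using ms4ax[where x="CImp (CAll (CImp cp cq)) (CImp (CAll cp) (CAll cq))" and G=G and a=a and b=b] by (simp add: ms4_axioms_def)
lemma axTA: "Pf G (CImp (CAll a) a)"
  using ms4ax[where x="CImp (CAll cp) cp" and G=G and a=a and b=b] by (simp add: ms4_axioms_def)
lemma ax5: "Pf G (CImp (CEx a) (CAll (CEx a)))"
  using ms4ax[where x="CImp (CEx cp) (CAll (CEx cp))" and G=G and a=a and b=b] by (simp add: ms4_axioms_def)
lemma axLC: "Pf G (CImp (CBox (CAll a)) (CAll (CBox a)))"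
  using ms4ax[where x="CImp (CBox (CAll cp)) (CAll (CBox cp))" and G=G and a=a and b=b] by (simp add: ms4_axioms_def)

lemma mp': "Pf G (CImp a b) \<Longrightarrow> Pf G a \<Longrightarrow> Pf G b" by (rule MS4_ext.mp)

lemma itrans: "Pf G (CImp a b) \<Longrightarrow> Pf G (CImp b c) \<Longrightarrow> Pf G (CImp a c)"
  by (erule t2, assumption) auto

lemma box_mono: "Pf G (CImp a b) \<Longrightarrow> Pf G (CImp (CBox a) (CBox b))"
  by (rule mp'[OF axK MS4_ext.nec_box])
lemma a_mono: "Pf G (CImp a b) \<Longrightarrow> Pf G (CImp (CAll a) (CAll b))"
  by (rule mp'[OF axKA MS4_ext.nec_all])

lemma box_mono2: "Pf G (CImp (CAnd a b) c) \<Longrightarrow> Pf G (CImp (CAnd (CBox a) (CBox b)) (CBox c))"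
proof -
  assume "Pf G (CImp (CAnd a b) c)"
  then have "Pf G (CImp a (CImp b c))" by (rule t1) auto
  then have 1: "Pf G (CImp (CBox a) (CBox (CImp b c)))" by (rule box_mono)
  show ?thesis by (rule t2[OF 1 axK]) auto
qed
lemma a_mono2: "Pf G (CImp (CAnd a b) c) \<Longrightarrow> Pf G (CImp (CAnd (CAll a) (CAll b)) (CAll c))"
proof -
  assume "Pf G (CImp (CAnd a b) c)"
  then have "Pf G (CImp a (CImp b c))" by (rule t1) auto
  then have 1: "Pf G (CImp (CAll a) (CAll (CImp b c)))" by (rule a_mono)
  show ?thesis by (rule t2[OF 1 axKA]) auto
qed

lemma dia_mono: "Pf G (CImp a b) \<Longrightarrow> Pf G (CImp (CDia a) (CDia b))"
proof -
  assume "Pf G (CImp a b)"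
  then have "Pf G (CImp (CNeg b) (CNeg a))" by (rule t1) auto
  then have "Pf G (CImp (CBox (CNeg b)) (CBox (CNeg a)))" by (rule box_mono)
  then show ?thesis by (rule t1) auto
qed
lemma e_mono: "Pf G (CImp a b) \<Longrightarrow> Pf G (CImp (CEx a) (CEx b))"
proof -
  assume "Pf G (CImp a b)"
  then have "Pf G (CImp (CNeg b) (CNeg a))" by (rule t1) auto
  then have "Pf G (CImp (CAll (CNeg b)) (CAll (CNeg a)))" by (rule a_mono)
  then show ?thesis by (rule t1) auto
qed

lemma dia_T: "Pf G (CImp a (CDia a))"
  by (rule t1[OF axT[where G=G and a="CNeg a"]]) auto
lemma ex_T: "Pf G (CImp a (CEx a))"
  by (rule t1[OF axTA[where G=G and a="CNeg a"]]) auto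

lemma dia_4: "Pf G (CImp (CDia (CDia a)) (CDia a))"
proof -
  have "Pf G (CImp (CBox (CBox (CNeg a))) (CBox (CNeg (CDia a))))"
    by (rule box_mono, rule t0) auto
  then have "Pf G (CImp (CBox (CNeg a)) (CBox (CNeg (CDia a))))" using itrans[OF ax4] by blast
  then show ?thesis by (rule t1) auto
qed

lemma dia_box: "Pf G (CImp (CAnd (CDia a) (CBox b)) (CDia (CAnd a b)))"
proof -
  have "Pf G (CImp (CAnd (CBox (CNeg (CAnd a b))) (CBox b)) (CBox (CNeg a)))"
    by (rule box_mono2, rule t0) auto
  then show ?thesis by (rule t1) auto
qed

lemma ex_all: "Pf G (CImp (CEx (CAll a)) (CAll a))"
proof -
  have 1: "Pf G (CImp (CAll (CNeg (CNeg a))) (CAll a))" by (rule a_mono, rule t0) auto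
  have 2: "Pf G (CImp (CAll a) (CAll (CNeg (CNeg a))))" by (rule a_mono, rule t0) auto
  have "Pf G (CImp (CEx (CNeg a)) (CNeg (CAll a)))" by (rule t1[OF 2]) auto
  then have 3: "Pf G (CImp (CAll (CEx (CNeg a))) (CAll (CNeg (CAll a))))" by (rule a_mono)
  show ?thesis by (rule t3[OF 1 ax5[where G=G and a="CNeg a"] 3]) auto
qed

lemma all_4: "Pf G (CImp (CAll a) (CAll (CAll a)))"
  using itrans[OF ex_T itrans[OF ax5 a_mono[OF ex_all]]] .

lemma ex_4: "Pf G (CImp (CEx (CEx a)) (CEx a))"
proof -
  have "Pf G (CImp (CAll (CAll (CNeg a))) (CAll (CNeg (CEx a))))" by (rule a_mono, rule t0) auto
  then have "Pf G (CImp (CAll (CNeg a)) (CAll (CNeg (CEx a))))" using itrans[OF all_4] by blast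
  then show ?thesis by (rule t1) auto
qed

lemma all_ex: "Pf G (CImp (CAnd (CAll a) (CEx b)) (CEx (CAnd a b)))"
proof -
  have "Pf G (CImp (CAnd (CAll a) (CAll (CNeg (CAnd a b)))) (CAll (CNeg b)))"
    by (rule a_mono2, rule t0) auto
  then show ?thesis by (rule t1) auto
qed

lemma ex_or: "Pf G (CImp (CEx (COr a b)) (COr (CEx a) (CEx b)))"
proof -
  have "Pf G (CImp (CAnd (CAll (CNeg a)) (CAll (CNeg b))) (CAll (CNeg (COr a b))))"
    by (rule a_mono2, rule t0) auto
  then show ?thesis by (rule t1) auto
qed
lemma ex_or2: "Pf G (CImp (COr (CEx a) (CEx b)) (CEx (COr a b)))"
proof -
  have 1: "Pf G (CImp (CEx a) (CEx (COr a b)))" by (rule e_mono, rule t0) auto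
  have 2: "Pf G (CImp (CEx b) (CEx (COr a b)))" by (rule e_mono, rule t0) auto
  show ?thesis by (rule t2[OF 1 2]) auto
qed

lemma box_and: "Pf G (CImp (CBox (CAnd a b)) (CAnd (CBox a) (CBox b)))"
proof -
  have 1: "Pf G (CImp (CBox (CAnd a b)) (CBox a))" by (rule box_mono, rule t0) auto
  have 2: "Pf G (CImp (CBox (CAnd a b)) (CBox b))" by (rule box_mono, rule t0) auto
  show ?thesis by (rule t2[OF 1 2]) auto
qed
lemma all_and: "Pf G (CImp (CAll (CAnd a b)) (CAnd (CAll a) (CAll b)))"
proof -
  have 1: "Pf G (CImp (CAll (CAnd a b)) (CAll a))" by (rule a_mono, rule t0) auto
  have 2: "Pf G (CImp (CAll (CAnd a b)) (CAll b))" by (rule a_mono, rule t0) auto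
  show ?thesis by (rule t2[OF 1 2]) auto
qed
lemma box_and2: "Pf G (CImp (CAnd (CBox a) (CBox b)) (CBox (CAnd a b)))"
  by (rule box_mono2, rule t0) auto
lemma all_and2: "Pf G (CImp (CAnd (CAll a) (CAll b)) (CAll (CAnd a b)))"
  by (rule a_mono2, rule t0) auto

lemma B_ax: "Pf G (CImp a (CAll (CEx a)))"
  using itrans[OF ex_T ax5] .

lemma boxall_allbox: "Pf G (CImp (CBox (CAll b)) (CAll (CBox (CAll b))))"
  using itrans[OF box_mono[OF all_4] axLC] .

lemma boxall_stab: "Pf G (CImp (CBox (CAll b)) (CBox (CAll (CBox (CAll b)))))"
  using itrans[OF ax4 box_mono[OF boxall_allbox]] .

lemma ex_boxall: "Pf G (CImp (CEx (CBox (CAll b))) (CBox (CAll b)))"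
  using itrans[OF itrans[OF e_mono[OF boxall_allbox] ex_all] axTA] .

lemma ex_box: "Pf G (CImp (CEx (CBox a)) (CBox (CEx a)))"
proof -
  have 1: "Pf G (CImp (CEx (CBox a)) (CEx (CBox (CAll (CEx a)))))"
    by (rule e_mono, rule box_mono, rule B_ax)
  have 2: "Pf G (CImp (CBox (CAll (CEx a))) (CBox (CEx a)))"
    using itrans[OF axLC axTA] .
  show ?thesis using itrans[OF 1 itrans[OF ex_boxall 2]] .
qed



definition stab :: "cfm set \<Rightarrow> cfm \<Rightarrow> bool" where
  "stab G a \<longleftrightarrow> Pf G (CImp a (CBox a))"

lemma stable_box: "stab G (CBox a)" unfolding stab_def by (rule ax4)
lemma stable_bot: "stab G CBot" unfolding stab_def by (rule t0) auto
lemma stable_and: "stab G a \<Longrightarrow> stab G b \<Longrightarrow> stab G (CAnd a b)"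
  unfolding stab_def
proof -
  assume sa: "Pf G (CImp a (CBox a))" and sb: "Pf G (CImp b (CBox b))"
  show "Pf G (CImp (CAnd a b) (CBox (CAnd a b)))"
    by (rule t3[OF sa sb box_and2[where a=a and b=b]]) auto
qed
lemma stable_or: "stab G a \<Longrightarrow> stab G b \<Longrightarrow> stab G (COr a b)"
proof -
  assume a: "stab G a" and b: "stab G b"
  have 1: "Pf G (CImp (CBox a) (CBox (COr a b)))" by (rule box_mono, rule t0) auto
  have 2: "Pf G (CImp (CBox b) (CBox (COr a b)))" by (rule box_mono, rule t0) auto
  show ?thesis using a b unfolding stab_def
    by - (rule t2[OF itrans[OF _ 1] itrans[OF _ 2]], assumption+, auto)
qed
lemma stable_ex: "stab G a \<Longrightarrow> stab G (CEx a)"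
  unfolding stab_def by (rule itrans[OF e_mono ex_box])

lemma goedel_stable: "stab G (goedel A)"
  by (induct A) (auto intro: stable_box stable_bot stable_and stable_or stable_ex)

lemma conjI': "Pf G a \<Longrightarrow> Pf G b \<Longrightarrow> Pf G (CAnd a b)"
  by (rule t2) auto

lemma nec_imp: "Pf G (CImp x z) \<Longrightarrow> Pf G (CBox (COr (CNeg x) z))"
  by (rule MS4_ext.nec_box, erule t1) auto

lemma impI_t: "stab G x \<Longrightarrow> Pf G (CImp (CAnd x y) z) \<Longrightarrow> Pf G (CImp x (CBox (COr (CNeg y) z)))"
proof -
  assume s: "stab G x" and h: "Pf G (CImp (CAnd x y) z)"
  have "Pf G (CImp x (COr (CNeg y) z))" by (rule t1[OF h]) auto
  then have "Pf G (CImp (CBox x) (CBox (COr (CNeg y) z)))" by (rule box_mono)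
  then show ?thesis using s unfolding stab_def by (rule itrans[rotated])
qed

lemma imp_T: "Pf G (CImp (CAnd (CBox (COr (CNeg x) y)) x) y)"
  by (rule t1[OF axT[where G=G and a="COr (CNeg x) y"]]) auto

lemma goedel_ipc: "ipc_axiom \<phi> \<Longrightarrow> Pf G (goedel \<phi>)"
proof (induct rule: ipc_axiom.induct)
  case (1 a b)
  show ?case by (simp, rule nec_imp, rule impI_t[OF goedel_stable], rule t0) auto
next
  case (2 a b c)
  let ?X = "CBox (COr (CNeg (goedel a)) (CBox (COr (CNeg (goedel b)) (goedel c))))"
  let ?Y = "CBox (COr (CNeg (goedel a)) (goedel b))"
  have "Pf G (CImp (CAnd (CAnd ?X ?Y) (goedel a)) (goedel c))"
    by (rule t3[OF imp_T[where x="goedel a" and y="CBox (COr (CNeg (goedel b)) (goedel c))"]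
           imp_T[where x="goedel a" and y="goedel b"] imp_T[where x="goedel b" and y="goedel c"]]) auto
  then have "Pf G (CImp (CAnd ?X ?Y) (CBox (COr (CNeg (goedel a)) (goedel c))))"
    by (rule impI_t[OF stable_and[OF stable_box stable_box]])
  then have "Pf G (CImp ?X (CBox (COr (CNeg ?Y) (CBox (COr (CNeg (goedel a)) (goedel c))))))"
    by (rule impI_t[OF stable_box])
  then show ?case by (simp, rule nec_imp)
next
  case (3 a b) show ?case by (simp, rule nec_imp, rule t0) auto
next
  case (4 a b) show ?case by (simp, rule nec_imp, rule t0) auto
next
  case (5 a b)
  show ?case by (simp, rule nec_imp, rule impI_t[OF goedel_stable], rule t0) auto
next
  case (6 a b) show ?case by (simp, rule nec_imp, rule t0) auto
next
  case (7 a b) show ?case by (simp, rule nec_imp, rule t0) auto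
next
  case (8 a c b)
  let ?X = "CBox (COr (CNeg (goedel a)) (goedel c))"
  let ?Y = "CBox (COr (CNeg (goedel b)) (goedel c))"
  have "Pf G (CImp (CAnd (CAnd ?X ?Y) (COr (goedel a) (goedel b))) (goedel c))"
    by (rule t2[OF imp_T[where x="goedel a" and y="goedel c"] imp_T[where x="goedel b" and y="goedel c"]]) auto
  then have "Pf G (CImp (CAnd ?X ?Y) (CBox (COr (CNeg (COr (goedel a) (goedel b))) (goedel c))))"
    by (rule impI_t[OF stable_and[OF stable_box stable_box]])
  then have "Pf G (CImp ?X (CBox (COr (CNeg ?Y) (CBox (COr (CNeg (COr (goedel a) (goedel b))) (goedel c))))))"
    by (rule impI_t[OF stable_box])
  then show ?case by (simp, rule nec_imp)
next
  case (9 a) show ?case by (simp, rule nec_imp, rule t0) auto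
qed



lemma mipc_goedel: "\<phi> \<in> mipc_axioms \<Longrightarrow> Pf G (goedel (isubst s \<phi>))"
proof -
  assume h: "\<phi> \<in> mipc_axioms"
  define a where "a = goedel (s 0)"
  define b where "b = goedel (s (Suc 0))"
  have sa: "stab G a" and sb: "stab G b" unfolding a_def b_def by (rule goedel_stable)+
  have M1: "Pf G (CImp (CBox (CAll (CAnd a b))) (CAnd (CBox (CAll a)) (CBox (CAll b))))"
    by (rule itrans[OF box_mono[OF all_and] box_and])
  have M1': "Pf G (CImp (CAnd (CBox (CAll a)) (CBox (CAll b))) (CBox (CAll (CAnd a b))))"
    by (rule itrans[OF box_and2 box_mono[OF all_and2]])
  have M2: "Pf G (CImp (CBox (CAll a)) a)" by (rule itrans[OF axT axTA])
  have M3: "Pf G (CImp (CBox (CAll a)) (CBox (CAll (CBox (CAll a)))))" by (rule boxall_stab)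
  have M7: "Pf G (CImp (CAnd (CEx a) (CEx b)) (CEx (CAnd (CEx a) b)))"
  proof -
    have "Pf G (CImp (CAnd (CEx a) (CEx b)) (CAnd (CAll (CEx a)) (CEx b)))"
      by (rule t1[OF ax5[where G=G and a=a]]) auto
    then show ?thesis by (rule itrans[OF _ all_ex])
  qed
  have M9: "Pf G (CImp (CEx a) (CBox (CAll (CEx a))))"
    using stable_ex[OF sa] unfolding stab_def by (rule itrans[OF _ box_mono[OF ax5]])
  from h show ?thesis
    unfolding mipc_axioms_def
    apply (simp add: IIff_def a_def[symmetric] b_def[symmetric])
    apply (elim disjE)
    apply (simp_all add: a_def[symmetric] b_def[symmetric])
    using M1 M1' M2 M3 M7 M9 ex_or ex_or2 ex_T ex_4 ex_boxall
    by (auto intro!: conjI' nec_imp)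
qed

lemma isubst_isubst: "isubst s (isubst s' a) = isubst (\<lambda>n. isubst s (s' n)) a"
  by (induct a) auto

lemma ipc_subst: "ipc_axiom a \<Longrightarrow> ipc_axiom (isubst s a)"
  by (induct rule: ipc_axiom.induct) (auto intro: ipc_axiom.intros)

lemma goedel_MIPC:
  assumes "a \<in> MIPC_ext H"
    and hH: "\<And>h s. h \<in> H \<Longrightarrow> Pf G (goedel (isubst s h))"
  shows "Pf G (goedel (isubst s a))"
  using assms(1)
proof (induct arbitrary: s rule: MIPC_ext.induct)
  case (ipc a) then show ?case using goedel_ipc ipc_subst by blast
next
  case (ax a) then show ?case by (rule mipc_goedel)
next
  case (extra a) then show ?case by (rule hH)
next
  case (mp a b)
  have 1: "Pf G (goedel (isubst s a))" by (rule mp.hyps(2))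
  have 2: "Pf G (CBox (COr (CNeg (goedel (isubst s a))) (goedel (isubst s b))))"
    using mp.hyps(4)[of s] by simp
  show ?case by (rule t3[OF 2 1 axT[where G=G and a="COr (CNeg (goedel (isubst s a))) (goedel (isubst s b))"]]) auto
next
  case (subst a s')
  show ?case using subst.hyps(2)[of "\<lambda>n. isubst s (s' n)"] by (simp add: isubst_isubst)
next
  case (nec a)
  show ?case using nec.hyps(2)[of s] by (simp add: MS4_ext.nec_box MS4_ext.nec_all)
qed



definition "grzax = CImp (CBox (CImp (CBox (CImp cp (CBox cp))) cp)) cp"
definition "lkax = CImp (CBox (CAll (CDia (CBox cp)))) (CDia (CAll cp))"
definition "kurax = IImp (IAll (INeg (INeg ip))) (INeg (INeg (IAll ip)))"
definition NN :: "cfm \<Rightarrow> cfm" where "NN x = CBox (COr (CNeg x) CBot)"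

lemma goedel_INeg: "goedel (INeg A) = NN (goedel A)"
  by (simp add: INeg_def NN_def)

lemma nn_dia: "Pf G (CImp (NN (NN x)) (CDia x))"
proof -
  have 1: "Pf G (CImp (NN (NN x)) (CNeg (NN x)))"
    unfolding NN_def[of "NN x"] by (rule t1[OF axT[where G=G and a="COr (CNeg (NN x)) CBot"]]) auto
  have 2: "Pf G (CImp (CBox (CNeg x)) (NN x))" unfolding NN_def by (rule box_mono, rule t0) auto
  show ?thesis by (rule t2[OF 1 2]) auto
qed

lemma boxdia_nn: "Pf G (CImp (CBox (CDia x)) (NN (NN x)))"
proof -
  have 2: "Pf G (CImp (NN x) (CBox (CNeg x)))" unfolding NN_def by (rule box_mono, rule t0) auto
  have "Pf G (CImp (CDia x) (COr (CNeg (NN x)) CBot))" by (rule t1[OF 2]) auto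
  then show ?thesis unfolding NN_def[of "NN x"] by (rule box_mono)
qed

lemma mckinsey:
  assumes grz: "Pf G grzax"
  shows "Pf G (CImp (CBox (CDia y)) (CDia (CBox y)))"
proof -
  let ?Q = "CBox (CImp (CNeg y) (CBox (CNeg y)))"
  have g0: "Pf G (CImp (CBox (CImp ?Q (CNeg y))) (CNeg y))"
    using MS4_ext.subst[OF grz, of "sb (CNeg y) y"] by (simp add: grzax_def)
  have g0': "Pf G (CImp (CBox (CNeg (CAnd ?Q y))) (CBox (CImp ?Q (CNeg y))))"
    by (rule box_mono, rule t0) auto
  have g1: "Pf G (CImp y (CDia (CAnd ?Q y)))" by (rule t2[OF g0 g0']) auto
  have g2: "Pf G (CImp (CDia y) (CDia (CAnd ?Q y)))" by (rule itrans[OF dia_mono[OF g1] dia_4])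
  have g5a: "Pf G (CImp (CAnd ?Q (CBox (CDia y))) (CBox y))"
    by (rule box_mono2, rule t0) auto
  have g5: "Pf G (CImp (CAnd (CAnd ?Q y) (CBox (CDia y))) (CBox y))"
    by (rule t1[OF g5a]) auto
  have g6: "Pf G (CImp (CDia (CAnd (CAnd ?Q y) (CBox (CDia y)))) (CDia (CBox y)))"
    by (rule dia_mono[OF g5])
  have g4: "Pf G (CImp (CAnd (CDia (CAnd ?Q y)) (CBox (CBox (CDia y)))) (CDia (CAnd (CAnd ?Q y) (CBox (CDia y)))))"
    by (rule dia_box)
  have gT: "Pf G (CImp (CBox (CDia y)) (CDia y))" by (rule axT)
  have g3: "Pf G (CImp (CBox (CDia y)) (CBox (CBox (CDia y))))" by (rule ax4)
  have "Pf G (CImp (CBox (CDia y)) (CAnd (CDia (CAnd ?Q y)) (CBox (CBox (CDia y)))))"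
    by (rule t3[OF gT g2 g3]) auto
  then show ?thesis using itrans[OF _ itrans[OF g4 g6]] by blast
qed

lemma kur_translation:
  assumes grz: "Pf G grzax" and lk: "Pf G lkax" and sa: "stab G a"
  shows "Pf G (CBox (COr (CNeg (CBox (CAll (NN (NN a))))) (NN (NN (CBox (CAll a))))))"
proof -
  let ?H = "CBox (CAll (NN (NN a)))"
  have lki: "Pf G (CImp (CBox (CAll (CDia (CBox a)))) (CDia (CAll a)))"
    using MS4_ext.subst[OF lk, of "sb a a"] by (simp add: lkax_def)
  have k1: "Pf G (CImp (NN (NN a)) (CDia (CBox a)))"
    using sa unfolding stab_def by (rule itrans[OF nn_dia dia_mono])
  have k3: "Pf G (CImp ?H (CDia (CAll a)))" by (rule itrans[OF box_mono[OF a_mono[OF k1]] lki])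
  have k4: "Pf G (CImp ?H (CBox (CDia (CAll a))))" by (rule itrans[OF ax4 box_mono[OF k3]])
  have k5: "Pf G (CImp ?H (CDia (CBox (CAll a))))" by (rule itrans[OF k4 mckinsey[OF grz]])
  have k6: "Pf G (CImp ?H (CBox (CDia (CBox (CAll a)))))" by (rule itrans[OF ax4 box_mono[OF k5]])
  have k7: "Pf G (CImp ?H (NN (NN (CBox (CAll a)))))" by (rule itrans[OF k6 boxdia_nn])
  show ?thesis by (rule nec_imp[OF k7])
qed

lemma isubst_id: "isubst IAt a = a" by (induct a) auto

lemma goedel_kurax: "goedel (isubst s kurax) = CBox (COr (CNeg (CBox (CAll (NN (NN (goedel (s 0))))))) (NN (NN (CBox (CAll (goedel (s 0)))))))"
  by (simp add: kurax_def goedel_INeg del: goedel.simps(5)) (simp add: INeg_def NN_def)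

lemma Kur_goedel:
  assumes grz: "Pf G grzax" and lk: "Pf G lkax" and "a \<in> Kur"
  shows "Pf G (goedel a)"
proof -
  have "a \<in> MIPC_ext {kurax}" using assms(3) by (simp add: Kur_def kurax_def)
  then have "Pf G (goedel (isubst IAt a))"
  proof (rule goedel_MIPC)
    fix h s assume "h \<in> {kurax}"
    then show "Pf G (goedel (isubst s h))"
      using kur_translation[OF grz lk goedel_stable] by (simp add: goedel_kurax)
  qed
  moreover have "isubst IAt a = a" for a by (induct a) auto
  ultimately show ?thesis by simp
qed

lemma lk_from_kur:
  assumes kt: "Pf G (goedel kurax)"
  shows "Pf G lkax"
proof -
  let ?a = "CBox cp"
  have kt': "Pf G (CBox (COr (CNeg (CBox (CAll (NN (NN ?a))))) (NN (NN (CBox (CAll ?a))))))"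
    using kt goedel_kurax[of IAt] isubst_id[of kurax] by simp
  have h: "Pf G (CImp (CBox (CAll (NN (NN ?a)))) (NN (NN (CBox (CAll ?a)))))"
    by (rule t1[OF mp'[OF axT kt']]) auto
  have l1: "Pf G (CImp (CBox (CAll (CDia ?a))) (CBox (CAll (CBox (CDia ?a)))))"
    by (rule itrans[OF ax4 box_mono[OF axLC]])
  have l2: "Pf G (CImp (CBox (CAll (CBox (CDia ?a)))) (CBox (CAll (NN (NN ?a)))))"
    by (rule box_mono[OF a_mono[OF boxdia_nn]])
  have l3: "Pf G (CImp (NN (NN (CBox (CAll ?a)))) (CDia (CAll cp)))"
    by (rule itrans[OF nn_dia dia_mono[OF itrans[OF axT a_mono[OF axT]]]])
  show ?thesis unfolding lkax_def by (rule itrans[OF l1 itrans[OF l2 itrans[OF h l3]]])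
qed



datatype pt = P0 | P1 | P2

lemma all_pt: "(\<forall>u::pt. P u) \<longleftrightarrow> P P0 \<and> P P1 \<and> P P2" by (metis pt.exhaust)
lemma ex_pt: "(\<exists>u::pt. P u) \<longleftrightarrow> P P0 \<or> P P1 \<or> P P2" by (metis pt.exhaust)

definition Rf :: "pt \<Rightarrow> pt \<Rightarrow> bool" where
  "Rf x y \<longleftrightarrow> (x, y) \<in> {(P0,P0),(P0,P2),(P1,P0),(P1,P1),(P1,P2),(P2,P0),(P2,P2)}"
definition Ef :: "pt \<Rightarrow> pt \<Rightarrow> bool" where
  "Ef x y \<longleftrightarrow> x = y \<or> (x \<noteq> P0 \<and> y \<noteq> P0)"

primrec ev :: "(nat \<Rightarrow> pt set) \<Rightarrow> cfm \<Rightarrow> pt \<Rightarrow> bool" where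
  "ev V CBot w = False"
| "ev V (CAt n) w = (w \<in> V n)"
| "ev V (CAnd a b) w = (ev V a w \<and> ev V b w)"
| "ev V (COr a b) w = (ev V a w \<or> ev V b w)"
| "ev V (CImp a b) w = (ev V a w \<longrightarrow> ev V b w)"
| "ev V (CBox a) w = (\<forall>u. Rf w u \<longrightarrow> ev V a u)"
| "ev V (CAll a) w = (\<forall>u. Ef w u \<longrightarrow> ev V a u)"

lemma ev_CNeg[simp]: "ev V (CNeg a) w = (\<not> ev V a w)" by (simp add: CNeg_def)
lemma ev_CDia[simp]: "ev V (CDia a) w = (\<exists>u. Rf w u \<and> ev V a u)" by (simp add: CDia_def)
lemma ev_CEx[simp]: "ev V (CEx a) w = (\<exists>u. Ef w u \<and> ev V a u)" by (simp add: CEx_def)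

lemma ev_subst: "ev V (csubst s a) w = ev (\<lambda>n. {u. ev V (s n) u}) a w"
  by (induct a arbitrary: w) auto

lemma v1: "ev V (CImp (CBox (CImp cp cq)) (CImp (CBox cp) (CBox cq))) w"
  by (cases w) (simp_all add: all_pt Rf_def)
lemma v2: "ev V (CImp (CBox cp) cp) w"
  by (cases w) (simp_all add: all_pt Rf_def)
lemma v3: "ev V (CImp (CBox cp) (CBox (CBox cp))) w"
  by (cases w) (simp_all add: all_pt Rf_def)
lemma v4: "ev V (CImp (CAll (CImp cp cq)) (CImp (CAll cp) (CAll cq))) w"
  by (cases w) (simp_all add: all_pt Ef_def)
lemma v5: "ev V (CImp (CAll cp) cp) w"
  by (cases w) (simp_all add: all_pt Ef_def)
lemma v6: "ev V (CImp (CEx cp) (CAll (CEx cp))) w"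
  by (cases w) (simp_all add: all_pt ex_pt Ef_def)
lemma v7: "ev V (CImp (CBox (CAll cp)) (CAll (CBox cp))) w"
  by (cases w) (simp_all add: all_pt ex_pt Ef_def Rf_def)
lemma v8: "ev V lkax w"
  by (cases w) (auto simp add: lkax_def all_pt ex_pt Ef_def Rf_def)

lemma sound: "a \<in> MS4_ext {lkax} \<Longrightarrow> ev V a w"
proof (induct arbitrary: V w rule: MS4_ext.induct)
  case (cpc a) then show ?case by (cases rule: cpc_axiom.cases) auto
next
  case (ax a) then show ?case
    unfolding ms4_axioms_def
    by (elim insertE emptyE) (simp only: v1 v2 v3 v4 v5 v6 v7)+
next
  case (extra a) then show ?case
    using v8 by simp
next
  case (mp a b) then show ?case by auto
next
  case (subst a s) then show ?case by (simp add: ev_subst)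
next
  case (nec_box a) then show ?case by simp
next
  case (nec_all a) then show ?case by simp
qed

lemma kur_not_LKur: "goedel kurax \<notin> LKur"
proof
  assume "goedel kurax \<in> LKur"
  then have "ev (\<lambda>n. {P0, P2}) (goedel kurax) P1" unfolding LKur_def lkax_def[symmetric] by (rule sound)
  then show False
    by (simp add: kurax_def INeg_def all_pt ex_pt Rf_def Ef_def)
qed



lemma ms4_mono: "A \<subseteq> MS4_ext B \<Longrightarrow> MS4_ext A \<subseteq> MS4_ext B"
proof
  fix x assume h: "A \<subseteq> MS4_ext B" and x: "x \<in> MS4_ext A"
  from x show "x \<in> MS4_ext B"
    by (induct rule: MS4_ext.induct) (use h in \<open>auto intro: MS4_ext.intros\<close>)
qed

lemma kurax_Kur: "kurax \<in> Kur"
  unfolding Kur_def kurax_def by (rule MIPC_ext.extra) simp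

lemma gk_GKur: "goedel kurax \<in> GKur"
  unfolding GKur_def by (rule MS4_ext.extra) (simp add: kurax_Kur)

lemma LKur_sub: "LKur \<subseteq> GKur"
proof -
  have "lkax \<in> GKur" unfolding GKur_def
    by (rule lk_from_kur) (simp add: GKur_def[symmetric] gk_GKur)
  then show ?thesis unfolding LKur_def lkax_def[symmetric] GKur_def
    by (intro ms4_mono) simp
qed

theorem proposition4p14:
  shows "LKur \<subset> GKur \<and> join MGrz LKur = join MGrz GKur"
proof (intro conjI)
  show "LKur \<subset> GKur" using LKur_sub gk_GKur kur_not_LKur by blast
  let ?J1 = "MS4_ext (MGrz \<union> LKur)"
  let ?J2 = "MS4_ext (MGrz \<union> GKur)"
  have "MGrz \<union> LKur \<subseteq> ?J2" using LKur_sub by (auto intro: MS4_ext.extra)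
  then have 1: "?J1 \<subseteq> ?J2" by (rule ms4_mono)
  have grz: "grzax \<in> ?J1"
    by (rule MS4_ext.extra) (simp add: MGrz_def grzax_def MS4_ext.extra)
  have lk: "lkax \<in> ?J1"
    by (rule MS4_ext.extra) (simp add: LKur_def lkax_def MS4_ext.extra)
  have "goedel ` Kur \<subseteq> ?J1" using Kur_goedel[OF grz lk] by blast
  then have "GKur \<subseteq> ?J1" unfolding GKur_def by (rule ms4_mono)
  then have "MGrz \<union> GKur \<subseteq> ?J1" by (auto intro: MS4_ext.extra)
  then have 2: "?J2 \<subseteq> ?J1" by (rule ms4_mono)
  show "join MGrz LKur = join MGrz GKur" unfolding join_def using 1 2 by blast
qed

end
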